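(* Let $X,Y$ be non-empty subsets of $A^+$. The following are equivalent: (i) $XY$ is a strong alt-induced code; (ii) $(X,Y)$ is a strong alternative code; (iii) $X$ is a prefix code, $Y$ is a suffix code, and $XY$ is a code.
   Context: $A$ is a finite alphabet, $A^*$ the set of words, $A^+$ the non-empty words, $XY=\{xy:x\in X,y\in Y\}$. For $X,Z\subseteq A^*$: $X^{-1}Z=\{u\in A^*: xu\in Z \text{ for some } x\in X\}$ and $ZY^{-1}=\{u\in A^*: uy\in Z\text{ for some } y\in Y\}$. A code is a subset of $A^+$ in which every word has at most one factorization into its elements. A prefix (suffix) code is a subset of $A^+$ in which no word is a proper prefix (suffix) of another. For non-empty $X,Y\subseteq A^+$, $(X,Y)$ is an alternative code if no word of $A^+$ admits two different similar alternative factorizations on $(X,Y)$ (factorizations $u_1\cdots u_n$, $n\ge2$, $u_i\in X\cup Y$, alternating between $X$ and $Y$; similar = beginning in the same set and ending in the same set); equivalently, $XY$ is a code and each element of $XY$ has exactly one factorization $xy$ with $x\in X,y\in Y$. An alternative code $(X,Y)$ is a strong alternative code if $X^{-1}(XY)\subseteq Y$ and $(XY)Y^{-1}\subseteq X$. A set $Z$ is a strong alt-induced code if $Z=XY$ for some strong alternative code $(X,Y)$. In (i), "$XY$ is a strong alt-induced code" is understood as in the paper, namely via this particular pair $(X,Y)$: $XY$ is a strong alt-induced code generated by $(X,Y)$. *)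

theory Defs
  imports Main
begin

text \<open>Words over the alphabet 'a are lists; A^+ is the set of non-empty lists.\<close>

definition conc :: "'a list set \<Rightarrow> 'a list set \<Rightarrow> 'a list set" where
  "conc X Y = {x @ y | x y. x \<in> X \<and> y \<in> Y}"

definition left_quot :: "'a list set \<Rightarrow> 'a list set \<Rightarrow> 'a list set" where
  "left_quot X Z = {u. \<exists>x\<in>X. x @ u \<in> Z}"

definition right_quot :: "'a list set \<Rightarrow> 'a list set \<Rightarrow> 'a list set" where
  "right_quot Z Y = {u. \<exists>y\<in>Y. u @ y \<in> Z}"

definition nonempty_words :: "'a list set \<Rightarrow> bool" where
  "nonempty_words X \<longleftrightarrow> [] \<notin> X"

definition is_code :: "'a list set \<Rightarrow> bool" where
  "is_code C \<longleftrightarrow> [] \<notin> C \<and>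
     (\<forall>us vs. set us \<subseteq> C \<longrightarrow> set vs \<subseteq> C \<longrightarrow> concat us = concat vs \<longrightarrow> us = vs)"

definition prefix_code :: "'a list set \<Rightarrow> bool" where
  "prefix_code C \<longleftrightarrow> [] \<notin> C \<and> (\<forall>u\<in>C. \<forall>v\<in>C. \<forall>w. v = u @ w \<longrightarrow> w = [])"

definition suffix_code :: "'a list set \<Rightarrow> bool" where
  "suffix_code C \<longleftrightarrow> [] \<notin> C \<and> (\<forall>u\<in>C. \<forall>v\<in>C. \<forall>w. v = w @ u \<longrightarrow> w = [])"

text \<open>An alternative factorization on (X,Y): a list of tagged factors, tag True meaning
  the factor is taken from X and False meaning it is taken from Y; at least two factors,
  with consecutive tags alternating.\<close>

definition alt_fact :: "'a list set \<Rightarrow> 'a list set \<Rightarrow> (bool \<times> 'a list) list \<Rightarrow> bool" where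
  "alt_fact X Y fs \<longleftrightarrow> length fs \<ge> 2 \<and>
     (\<forall>(b, u) \<in> set fs. if b then u \<in> X else u \<in> Y) \<and>
     (\<forall>i. Suc i < length fs \<longrightarrow> fst (fs ! i) \<noteq> fst (fs ! Suc i))"

definition similar :: "(bool \<times> 'a list) list \<Rightarrow> (bool \<times> 'a list) list \<Rightarrow> bool" where
  "similar fs gs \<longleftrightarrow> fst (hd fs) = fst (hd gs) \<and> fst (last fs) = fst (last gs)"

definition alt_code :: "'a list set \<Rightarrow> 'a list set \<Rightarrow> bool" where
  "alt_code X Y \<longleftrightarrow> X \<noteq> {} \<and> Y \<noteq> {} \<and> [] \<notin> X \<and> [] \<notin> Y \<and>
     (\<forall>fs gs. alt_fact X Y fs \<longrightarrow> alt_fact X Y gs \<longrightarrow> similar fs gs \<longrightarrow>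
        concat (map snd fs) = concat (map snd gs) \<longrightarrow> fs = gs)"

definition strong_alt_code :: "'a list set \<Rightarrow> 'a list set \<Rightarrow> bool" where
  "strong_alt_code X Y \<longleftrightarrow> alt_code X Y \<and>
     left_quot X (conc X Y) \<subseteq> Y \<and> right_quot (conc X Y) Y \<subseteq> X"

definition strong_alt_induced_by :: "'a list set \<Rightarrow> 'a list set \<Rightarrow> 'a list set \<Rightarrow> bool" where
  "strong_alt_induced_by Z X Y \<longleftrightarrow> Z = conc X Y \<and> strong_alt_code X Y"

end

theory Submission
  imports Defs
begin

fun altn :: "(bool \<times> 'b) list \<Rightarrow> bool" where
  "altn (a#b#r) = (fst a \<noteq> fst b \<and> altn (b#r))"
| "altn _ = True"

lemma altn_iff: "(\<forall>i. Suc i < length fs \<longrightarrow> fst (fs ! i) \<noteq> fst (fs ! Suc i)) \<longleftrightarrow> altn fs"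
proof (induction fs rule: altn.induct)
  case (1 a b r)
  have "(\<forall>i. Suc i < length (a#b#r) \<longrightarrow> fst ((a#b#r) ! i) \<noteq> fst ((a#b#r) ! Suc i))
     \<longleftrightarrow> fst a \<noteq> fst b \<and> (\<forall>i. Suc i < length (b#r) \<longrightarrow> fst ((b#r) ! i) \<noteq> fst ((b#r) ! Suc i))"
    (is "?L \<longleftrightarrow> ?R")
  proof
    assume ?L
    then show ?R by (auto dest: spec[of _ 0] spec[of _ "Suc _"])
  next
    assume R: ?R
    show ?L
    proof (intro allI impI)
      fix i assume "Suc i < length (a#b#r)"
      then show "fst ((a#b#r) ! i) \<noteq> fst ((a#b#r) ! Suc i)"
        using R by (cases i) auto
    qed
  qed
  then show ?case using 1 by simp
qed auto

lemma altn_Cons: "altn (a#fs) \<longleftrightarrow> (fs = [] \<or> fst a \<noteq> fst (hd fs)) \<and> altn fs"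
  by (cases fs) auto

lemma altn_snoc: "altn (fs@[a]) \<longleftrightarrow> (fs = [] \<or> fst (last fs) \<noteq> fst a) \<and> altn fs"
  by (induction fs rule: altn.induct) auto

inductive xyl :: "'a list set \<Rightarrow> 'a list set \<Rightarrow> (bool \<times> 'a list) list \<Rightarrow> bool" for X Y where
  "xyl X Y []"
| "x \<in> X \<Longrightarrow> y \<in> Y \<Longrightarrow> xyl X Y r \<Longrightarrow> xyl X Y ((True,x)#(False,y)#r)"

fun pairs :: "(bool \<times> 'a list) list \<Rightarrow> 'a list list" where
  "pairs (a#b#r) = (snd a @ snd b) # pairs r"
| "pairs _ = []"

lemma L1: "xyl X Y fs \<Longrightarrow> concat (pairs fs) = concat (map snd fs)"
  by (induction rule: xyl.induct) auto

lemma L2: "xyl X Y fs \<Longrightarrow> set (pairs fs) \<subseteq> conc X Y"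
  by (induction rule: xyl.induct) (auto simp: conc_def)

lemma L3: "xyl X Y fs \<Longrightarrow> xyl X Y gs \<Longrightarrow> pairs fs = pairs gs \<Longrightarrow>
   (\<forall>x\<in>X. \<forall>x'\<in>X. \<forall>w. x' = x@w \<longrightarrow> w=[]) \<Longrightarrow> fs = gs"
proof (induction arbitrary: gs rule: xyl.induct)
  case 1 then show ?case by (cases rule: xyl.cases) auto
next
  case (2 x y r)
  from 2(5) show ?case
  proof (cases rule: xyl.cases)
    case 1 then show ?thesis using 2 by simp
  next
    case (2 x' y' r')
    with "2.prems" have e: "x@y = x'@y'" and pr: "pairs r = pairs r'" by auto
    from e obtain us where "(x = x'@us \<and> us@y = y') \<or> (x@us = x' \<and> y = us@y')"
      by (auto simp: append_eq_append_conv2)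
    then have "x = x' \<and> y = y'" using "2.prems"(3) \<open>x\<in>X\<close> \<open>x'\<in>X\<close> by auto
    then show ?thesis using "2.IH"[OF \<open>xyl X Y r'\<close> pr "2.prems"(3)] 2 by simp
  qed
qed

lemma L4: "xyl X Y fs \<Longrightarrow> altn fs \<and> (\<forall>(b, u) \<in> set fs. if b then u \<in> X else u \<in> Y) \<and>
   (fs \<noteq> [] \<longrightarrow> fst (hd fs) \<and> \<not> fst (last fs) \<and> length fs \<ge> 2)"
proof (induction rule: xyl.induct)
  case 1 then show ?case by simp
next
  case (2 x y r)
  then show ?case by (cases r) auto
qed

lemma L5: "altn fs \<Longrightarrow> (\<forall>(b, u) \<in> set fs. if b then u \<in> X else u \<in> Y) \<Longrightarrow> fs \<noteq> [] \<Longrightarrow>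
   fst (hd fs) \<Longrightarrow> \<not> fst (last fs) \<Longrightarrow> xyl X Y fs"
proof (induction "length fs" arbitrary: fs rule: less_induct)
  case less
  show ?case
  proof (cases fs)
    case Nil then show ?thesis using less by simp
  next
    case (Cons a t)
    show ?thesis
    proof (cases t)
      case Nil then show ?thesis using less Cons by simp
    next
      case (Cons b r)
      obtain ba ua bb ub where ab: "a = (ba,ua)" "b = (bb,ub)" by fastforce
      have fs: "fs = (True,ua)#(False,ub)#r"
        using less.prems \<open>fs = a#t\<close> Cons ab by auto
      have "xyl X Y r"
      proof (cases r)
        case Nil then show ?thesis by (simp add: xyl.intros)
      next
        case (Cons c r')
        show ?thesis
          apply (rule less.hyps)
          using less.prems fs Cons by auto
      qed
      then show ?thesis using fs less.prems by (auto intro: xyl.intros)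
    qed
  qed
qed

definition sp :: "'a list set \<Rightarrow> 'a list set \<Rightarrow> 'a list \<Rightarrow> 'a list \<times> 'a list" where
  "sp X Y u = (SOME p. fst p \<in> X \<and> snd p \<in> Y \<and> u = fst p @ snd p)"

definition tag :: "'a list set \<Rightarrow> 'a list set \<Rightarrow> 'a list list \<Rightarrow> (bool \<times> 'a list) list" where
  "tag X Y us = concat (map (\<lambda>u. [(True, fst (sp X Y u)), (False, snd (sp X Y u))]) us)"

lemma tag_ok: "set us \<subseteq> conc X Y \<Longrightarrow> xyl X Y (tag X Y us) \<and> pairs (tag X Y us) = us"
proof (induction us)
  case Nil then show ?case by (simp add: tag_def xyl.intros)
next
  case (Cons u us)
  then have "\<exists>p. fst p \<in> X \<and> snd p \<in> Y \<and> u = fst p @ snd p" by (auto simp: conc_def)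
  then have "fst (sp X Y u) \<in> X \<and> snd (sp X Y u) \<in> Y \<and> u = fst (sp X Y u) @ snd (sp X Y u)"
    unfolding sp_def by (rule someI_ex)
  then show ?case using Cons by (auto simp: tag_def intro: xyl.intros)
qed

lemma xyl_alt: "xyl X Y fs \<Longrightarrow> fs \<noteq> [] \<Longrightarrow> alt_fact X Y fs"
  using L4[of X Y fs] altn_iff[of fs] by (auto simp: alt_fact_def)

lemma fwd:
  assumes sa: "strong_alt_code X Y"
  shows "prefix_code X \<and> suffix_code Y \<and> is_code (conc X Y)"
proof -
  from sa have ac: "alt_code X Y" and lq: "left_quot X (conc X Y) \<subseteq> Y"
    and rq: "right_quot (conc X Y) Y \<subseteq> X" by (auto simp: strong_alt_code_def)
  from ac have ne: "X \<noteq> {}" "Y \<noteq> {}" "[] \<notin> X" "[] \<notin> Y" by (auto simp: alt_code_def)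
  have uniq: "\<And>fs gs. alt_fact X Y fs \<Longrightarrow> alt_fact X Y gs \<Longrightarrow> similar fs gs \<Longrightarrow>
        concat (map snd fs) = concat (map snd gs) \<Longrightarrow> fs = gs"
    using ac by (auto simp: alt_code_def)
  have af2: "\<And>x y. x \<in> X \<Longrightarrow> y \<in> Y \<Longrightarrow> alt_fact X Y [(True,x),(False,y)]"
    by (auto simp: alt_fact_def less_Suc_eq)
  have pc: "prefix_code X"
    unfolding prefix_code_def
  proof (intro conjI ballI allI impI)
    fix u v w assume u: "u \<in> X" and v: "v \<in> X" and vw: "v = u @ w"
    obtain y where y: "y \<in> Y" using ne by auto
    have "u @ (w @ y) = v @ y" using vw by simp
    then have "u @ (w @ y) \<in> conc X Y" using v y unfolding conc_def by blast
    then have "w @ y \<in> Y" using lq u by (auto simp: left_quot_def)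
    then have "[(True,u),(False,w@y)] = [(True,v),(False,y)]"
      using uniq[OF af2[OF u] af2[OF v y]] vw by (auto simp: similar_def)
    then show "w = []" using vw by simp
  qed (use ne in auto)
  have sc: "suffix_code Y"
    unfolding suffix_code_def
  proof (intro conjI ballI allI impI)
    fix u v w assume u: "u \<in> Y" and v: "v \<in> Y" and vw: "v = w @ u"
    obtain x where x: "x \<in> X" using ne by auto
    have "(x @ w) @ u \<in> conc X Y" using v x vw by (auto simp: conc_def)
    then have "x @ w \<in> right_quot (conc X Y) Y" using u unfolding right_quot_def by blast
    then have "x @ w \<in> X" using rq by blast
    then have "[(True,x@w),(False,u)] = [(True,x),(False,v)]"
      using uniq[OF af2[OF _ u] af2[OF x v]] vw by (auto simp: similar_def)
    then show "w = []" by simp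
  qed (use ne in auto)
  have nxy: "[] \<notin> conc X Y" using ne by (auto simp: conc_def)
  have ic: "is_code (conc X Y)"
    unfolding is_code_def
  proof (intro conjI allI impI)
    fix us vs assume us: "set us \<subseteq> conc X Y" and vs: "set vs \<subseteq> conc X Y"
      and eq: "concat us = concat vs"
    show "us = vs"
    proof (cases "us = [] \<or> vs = []")
      case True
      have "us = [] \<and> vs = []"
      proof (cases "us = []")
        case True
        then have "concat vs = []" using eq by simp
        then have "\<forall>v\<in>set vs. v = []" by simp
        then show ?thesis using vs nxy True by (cases vs) auto
      next
        case F: False
        then have vn: "vs = []" using True by simp
        then have "concat us = []" using eq by simp
        then have "\<forall>v\<in>set us. v = []" by simp
        then show ?thesis using us nxy F by (cases us) auto
      qed
      then show ?thesis by simp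
    next
      case False
      note tu = tag_ok[OF us] and tv = tag_ok[OF vs]
      have n1: "tag X Y us \<noteq> []" using False tu by auto
      have n2: "tag X Y vs \<noteq> []" using False tv by auto
      have "tag X Y us = tag X Y vs"
      proof (rule uniq)
        show "alt_fact X Y (tag X Y us)" by (rule xyl_alt[OF conjunct1[OF tu] n1])
        show "alt_fact X Y (tag X Y vs)" by (rule xyl_alt[OF conjunct1[OF tv] n2])
        show "similar (tag X Y us) (tag X Y vs)"
          using L4[OF conjunct1[OF tu]] L4[OF conjunct1[OF tv]] n1 n2 by (simp add: similar_def)
        have "concat (map snd (tag X Y us)) = concat us"
          using L1[OF conjunct1[OF tu]] conjunct2[OF tu] by simp
        moreover have "concat (map snd (tag X Y vs)) = concat vs"
          using L1[OF conjunct1[OF tv]] conjunct2[OF tv] by simp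
        ultimately show "concat (map snd (tag X Y us)) = concat (map snd (tag X Y vs))"
          using eq by simp
      qed
      then have "pairs (tag X Y us) = pairs (tag X Y vs)" by simp
      then show ?thesis using conjunct2[OF tu] conjunct2[OF tv] by simp
    qed
  qed (rule nxy)
  show ?thesis using pc sc ic by simp
qed

lemma bwd:
  assumes ne: "X \<noteq> {}" "Y \<noteq> {}" "[] \<notin> X" "[] \<notin> Y"
    and pc: "prefix_code X" and sc: "suffix_code Y" and ic: "is_code (conc X Y)"
  shows "strong_alt_code X Y"
proof -
  have pX: "\<forall>x\<in>X. \<forall>x'\<in>X. \<forall>w. x' = x@w \<longrightarrow> w=[]" using pc by (auto simp: prefix_code_def)
  have sY: "\<forall>x\<in>Y. \<forall>x'\<in>Y. \<forall>w. x' = w@x \<longrightarrow> w=[]" using sc by (auto simp: suffix_code_def)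
  have codeuse: "\<And>us vs. set us \<subseteq> conc X Y \<Longrightarrow> set vs \<subseteq> conc X Y \<Longrightarrow> concat us = concat vs \<Longrightarrow> us = vs"
    using ic by (auto simp: is_code_def)
  have lq: "left_quot X (conc X Y) \<subseteq> Y"
  proof
    fix u assume "u \<in> left_quot X (conc X Y)"
    then obtain x x' y where "x \<in> X" "x' \<in> X" "y \<in> Y" "x @ u = x' @ y"
      by (auto simp: left_quot_def conc_def)
    moreover then obtain us where "(x = x'@us \<and> us@u = y) \<or> (x@us = x' \<and> u = us@y)"
      by (auto simp: append_eq_append_conv2)
    ultimately show "u \<in> Y"
    proof (elim disjE conjE)
      assume "x = x'@us" "us@u = y"
      then have "us = []" using pX \<open>x\<in>X\<close> \<open>x'\<in>X\<close> by blast
      then show ?thesis using \<open>us@u = y\<close> \<open>y\<in>Y\<close> by simp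
    next
      assume "x@us = x'" "u = us@y"
      then have "us = []" using pX \<open>x\<in>X\<close> \<open>x'\<in>X\<close> by blast
      then show ?thesis using \<open>u = us@y\<close> \<open>y\<in>Y\<close> by simp
    qed
  qed
  have rq: "right_quot (conc X Y) Y \<subseteq> X"
  proof
    fix u assume "u \<in> right_quot (conc X Y) Y"
    then obtain x y y' where "x \<in> X" "y \<in> Y" "y' \<in> Y" "u @ y' = x @ y"
      by (auto simp: right_quot_def conc_def)
    moreover then obtain us where "(u = x@us \<and> us@y' = y) \<or> (u@us = x \<and> y' = us@y)"
      by (auto simp: append_eq_append_conv2)
    ultimately show "u \<in> X"
    proof (elim disjE conjE)
      assume "u = x@us" "us@y' = y"
      then have "us = []" using sY \<open>y\<in>Y\<close> \<open>y'\<in>Y\<close> by blast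
      then show ?thesis using \<open>u = x@us\<close> \<open>x\<in>X\<close> by simp
    next
      assume "u@us = x" "y' = us@y"
      then have "us = []" using sY \<open>y\<in>Y\<close> \<open>y'\<in>Y\<close> by blast
      then show ?thesis using \<open>u@us = x\<close> \<open>x\<in>X\<close> by simp
    qed
  qed
  obtain x0 y0 where x0: "x0 \<in> X" and y0: "y0 \<in> Y" using ne by auto
  define ext where "ext fs = (if fst (hd fs) then [] else [(True,x0)]) @ fs @
      (if fst (last fs) then [(False,y0)] else [])" for fs :: "(bool \<times> 'a list) list"
  have extx: "xyl X Y (ext fs)" if af: "alt_fact X Y fs" for fs
  proof -
    from af have len: "length fs \<ge> 2" and mem: "\<forall>(b, u) \<in> set fs. if b then u \<in> X else u \<in> Y"
      and al: "altn fs" using altn_iff[of fs] by (auto simp: alt_fact_def)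
    have fne: "fs \<noteq> []" using len by auto
    define fs1 where "fs1 = (if fst (hd fs) then [] else [(True,x0)]) @ fs"
    have f1ne: "fs1 \<noteq> []" and hd1: "fst (hd fs1)" and last1: "last fs1 = last fs"
      using fne by (auto simp: fs1_def)
    have al1: "altn fs1" using al fne by (auto simp: fs1_def altn_Cons)
    have mem1: "\<forall>(b, u) \<in> set fs1. if b then u \<in> X else u \<in> Y" using mem x0 by (auto simp: fs1_def)
    have e: "ext fs = fs1 @ (if fst (last fs) then [(False,y0)] else [])"
      by (simp add: ext_def fs1_def)
    show ?thesis unfolding e
      apply (rule L5)
      using al1 mem1 f1ne hd1 last1 y0 by (auto simp: altn_snoc)
  qed
  have cext: "concat (map snd (ext fs)) = (if fst (hd fs) then [] else x0) @ concat (map snd fs) @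
      (if fst (last fs) then y0 else [])" for fs
    by (simp add: ext_def)
  have ac: "alt_code X Y"
    unfolding alt_code_def
  proof (intro conjI allI impI)
    fix fs gs assume af: "alt_fact X Y fs" and ag: "alt_fact X Y gs" and sim: "similar fs gs"
      and eq: "concat (map snd fs) = concat (map snd gs)"
    have xf: "xyl X Y (ext fs)" and xg: "xyl X Y (ext gs)" using extx af ag by auto
    have "concat (map snd (ext fs)) = concat (map snd (ext gs))"
      using cext[of fs] cext[of gs] sim eq by (simp add: similar_def)
    then have "pairs (ext fs) = pairs (ext gs)"
      using codeuse[OF L2[OF xf] L2[OF xg]] L1[OF xf] L1[OF xg] by simp
    then have "ext fs = ext gs" using L3[OF xf xg _ pX] by simp
    then show "fs = gs" using sim by (simp add: ext_def similar_def)
  qed (use ne in auto)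
  show ?thesis using ac lq rq by (simp add: strong_alt_code_def)
qed

theorem theoremT:
  fixes X Y :: "('a::finite) list set"
  assumes "X \<noteq> {}" and "Y \<noteq> {}" and "[] \<notin> X" and "[] \<notin> Y"
  shows "(strong_alt_induced_by (conc X Y) X Y \<longleftrightarrow> strong_alt_code X Y)
       \<and> (strong_alt_code X Y \<longleftrightarrow> (prefix_code X \<and> suffix_code Y \<and> is_code (conc X Y)))"
  using fwd bwd[OF assms] by (auto simp: strong_alt_induced_by_def)

end
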